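(* Let $\varPhi\subset\mathbb{E}^3$ be a skew ruled surface with invariants $\delta,\kappa,\lambda$, right normalized with support function $q=\frac{f(u)+g(u)v}{w}$, neither $f$ nor $g$ the zero function. Then the following are equivalent: (a) the Tchebychev vector field $\overline{T}$ is incompressible with respect to the relative metric ($\operatorname{div}^G\overline{T}=0$); (b) the scalar curvature $S$ of the relative metric vanishes identically; (c) $\varPhi$ is conoidal and $f=\frac12|\delta|^{1/2}g\left(\int|\delta|^{1/2}\lambda\,\mathrm{d}u+c\right)$, $c\in\mathbb{R}$.
   Context: $\varPhi$ is a ruled $C^r$-surface ($r\ge3$) with nonvanishing Gaussian curvature, in standard parameters $\overline{x}(u,v)=\overline{s}(u)+v\,\overline{e}(u)$, $|\overline{e}|=|\overline{e}'|=1$, $\langle\overline{s}',\overline{e}'\rangle=0$. Frame $\overline{n}=\overline{e}'$, $\overline{z}=\overline{e}\times\overline{n}$. Invariants: $\delta=(\overline{s}',\overline{e},\overline{e}')\neq0$, $\kappa=(\overline{e},\overline{e}',\overline{e}'')$, $\lambda=\cot\sphericalangle(\overline{e},\overline{s}')$, $\overline{s}'=\delta\lambda\overline{e}+\delta\overline{z}$. Conoidal means $\kappa\equiv0$. $w=\sqrt{\delta^2+v^2}$, $\overline{\xi}=(\delta\overline{n}-v\overline{z})/w$. $h_{11}=-(\kappa w^2+\delta'v-\delta^2\lambda)/w$, $h_{12}=\delta/w$, $h_{22}=0$. A relative normalization is determined by its support function $q=\langle\overline{\xi},\overline{y}\rangle\neq0$; right normalization: $q=(f+gv)/w$, $f,g$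 functions of $u$. The relative metric is the indefinite metric $G_{ij}=q^{-1}h_{ij}$; $S$ is its scalar (Gaussian) curvature and $\operatorname{div}^G$ its divergence, $\operatorname{div}^G\overline{T}=|\det G|^{-1/2}(|\det G|^{1/2}T^i)_{/i}$. Darboux tensor $A_{ijk}=q^{-1}\langle\overline{\xi},\nabla^G_k\nabla^G_j\overline{x}_{/i}\rangle$, Tchebychev vector $\overline{T}=T^m\overline{x}_{/m}$, $T^m=\frac12A_i^{\ im}$; equivalently $T^1=\frac{w^2q_{/2}+vq}{\delta w}$, $T^2=\frac{2\delta w^2q_{/1}+\delta'q(\delta^2-v^2)}{2\delta^2w}+\frac{T^1(\kappa w^2+\delta'v-\delta^2\lambda)}{\delta}$. $\int\cdots\mathrm{d}u$ denotes an antiderivative. *)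

theory Defs
  imports "HOL-Analysis.Analysis" "HOL-Analysis.Cross3"
begin

fun vderiv_n :: "nat \<Rightarrow> (real \<Rightarrow> 'a::real_normed_vector) \<Rightarrow> real \<Rightarrow> 'a" where
  "vderiv_n 0 f = f"
| "vderiv_n (Suc n) f = (\<lambda>t. vector_derivative (vderiv_n n f) (at t))"

definition Ck_on :: "nat \<Rightarrow> real set \<Rightarrow> (real \<Rightarrow> 'a::real_normed_vector) \<Rightarrow> bool" where
  "Ck_on k I f \<longleftrightarrow>
     (\<forall>j<k. \<forall>t\<in>I. (vderiv_n j f has_vector_derivative vderiv_n (Suc j) f t) (at t))
     \<and> continuous_on I (vderiv_n k f)"

definition pd1 :: "(real \<Rightarrow> real \<Rightarrow> 'a::real_normed_vector) \<Rightarrow> real \<Rightarrow> real \<Rightarrow> 'a" where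
  "pd1 F u v = vector_derivative (\<lambda>t. F t v) (at u)"

definition pd2 :: "(real \<Rightarrow> real \<Rightarrow> 'a::real_normed_vector) \<Rightarrow> real \<Rightarrow> real \<Rightarrow> 'a" where
  "pd2 F u v = vector_derivative (\<lambda>t. F u t) (at v)"

definition triple :: "real^3 \<Rightarrow> real^3 \<Rightarrow> real^3 \<Rightarrow> real" where
  "triple a b c = a \<bullet> cross3 b c"

definition vec_angle :: "real^3 \<Rightarrow> real^3 \<Rightarrow> real" where
  "vec_angle a b = arccos ((a \<bullet> b) / (norm a * norm b))"

definition rsurf :: "(real \<Rightarrow> real^3) \<Rightarrow> (real \<Rightarrow> real^3) \<Rightarrow> real \<Rightarrow> real \<Rightarrow> real^3" where
  "rsurf s e u v = s u + v *\<^sub>R e u"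

definition rs_delta :: "(real \<Rightarrow> real^3) \<Rightarrow> (real \<Rightarrow> real^3) \<Rightarrow> real \<Rightarrow> real" where
  "rs_delta s e u = triple (vderiv_n 1 s u) (e u) (vderiv_n 1 e u)"

definition rs_kappa :: "(real \<Rightarrow> real^3) \<Rightarrow> real \<Rightarrow> real" where
  "rs_kappa e u = triple (e u) (vderiv_n 1 e u) (vderiv_n 2 e u)"

definition rs_lambda :: "(real \<Rightarrow> real^3) \<Rightarrow> (real \<Rightarrow> real^3) \<Rightarrow> real \<Rightarrow> real" where
  "rs_lambda s e u = cot (vec_angle (e u) (vderiv_n 1 s u))"

definition conoidal_on :: "real set \<Rightarrow> (real \<Rightarrow> real^3) \<Rightarrow> bool" where
  "conoidal_on I e \<longleftrightarrow> (\<forall>u\<in>I. rs_kappa e u = 0)"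

definition rs_w :: "(real \<Rightarrow> real^3) \<Rightarrow> (real \<Rightarrow> real^3) \<Rightarrow> real \<Rightarrow> real \<Rightarrow> real" where
  "rs_w s e u v = sqrt ((rs_delta s e u)\<^sup>2 + v\<^sup>2)"

definition rs_xi :: "(real \<Rightarrow> real^3) \<Rightarrow> (real \<Rightarrow> real^3) \<Rightarrow> real \<Rightarrow> real \<Rightarrow> real^3" where
  "rs_xi s e u v =
     (let N = cross3 (pd1 (rsurf s e) u v) (pd2 (rsurf s e) u v) in (1 / norm N) *\<^sub>R N)"

definition rs_h11 where "rs_h11 s e u v = rs_xi s e u v \<bullet> pd1 (pd1 (rsurf s e)) u v"
definition rs_h12 where "rs_h12 s e u v = rs_xi s e u v \<bullet> pd2 (pd1 (rsurf s e)) u v"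
definition rs_h22 where "rs_h22 s e u v = rs_xi s e u v \<bullet> pd2 (pd2 (rsurf s e)) u v"

definition rn_q where
  "rn_q s e f g u v = (f u + g u * v) / rs_w s e u v"

definition rn_G11 where "rn_G11 s e f g u v = rs_h11 s e u v / rn_q s e f g u v"
definition rn_G12 where "rn_G12 s e f g u v = rs_h12 s e u v / rn_q s e f g u v"
definition rn_G22 where "rn_G22 s e f g u v = rs_h22 s e u v / rn_q s e f g u v"

text \<open>Gaussian (scalar) curvature of a 2-dimensional (possibly indefinite) metric
  E du^2 + 2F du dv + G dv^2, via the Brioschi formula.\<close>
definition metric_curvature ::
  "(real \<Rightarrow> real \<Rightarrow> real) \<Rightarrow> (real \<Rightarrow> real \<Rightarrow> real) \<Rightarrow> (real \<Rightarrow> real \<Rightarrow> real) \<Rightarrow> real \<Rightarrow> real \<Rightarrow> real"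
where
  "metric_curvature E F G u v =
    (let e = E u v; f = F u v; g = G u v;
         Eu = pd1 E u v; Ev = pd2 E u v; Fu = pd1 F u v; Fv = pd2 F u v;
         Gu = pd1 G u v; Gv = pd2 G u v;
         Evv = pd2 (pd2 E) u v; Fuv = pd2 (pd1 F) u v; Guu = pd1 (pd1 G) u v;
         M1 = (- Evv / 2 + Fuv - Guu / 2) * (e * g - f * f)
              - (Eu / 2) * ((Fv - Gu / 2) * g - f * (Gv / 2))
              + (Fu - Ev / 2) * ((Fv - Gu / 2) * f - e * (Gv / 2));
         M2 = - (Ev / 2) * ((Ev / 2) * g - f * (Gu / 2))
              + (Gu / 2) * ((Ev / 2) * f - e * (Gu / 2))
     in (M1 - M2) / (e * g - f * f)\<^sup>2)"

definition rn_S where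
  "rn_S s e f g u v = metric_curvature (rn_G11 s e f g) (rn_G12 s e f g) (rn_G22 s e f g) u v"

text \<open>Components of the Tchebychev vector (formulas from the context; the factor
  (kappa w^2 + delta' v - delta^2 lambda) is written as -w h_11).\<close>
definition rn_T1 where
  "rn_T1 s e f g u v =
     (let d = rs_delta s e u; w = rs_w s e u v; q = rn_q s e f g u v in
      (w\<^sup>2 * pd2 (rn_q s e f g) u v + v * q) / (d * w))"

definition rn_T2 where
  "rn_T2 s e f g u v =
     (let d = rs_delta s e u; d' = deriv (rs_delta s e) u; w = rs_w s e u v;
          q = rn_q s e f g u v in
      (2 * d * w\<^sup>2 * pd1 (rn_q s e f g) u v + d' * q * (d\<^sup>2 - v\<^sup>2)) / (2 * d\<^sup>2 * w)
      + rn_T1 s e f g u v * (- w * rs_h11 s e u v) / d)"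

definition rn_rootdet where
  "rn_rootdet s e f g u v =
     sqrt \<bar>rn_G11 s e f g u v * rn_G22 s e f g u v - (rn_G12 s e f g u v)\<^sup>2\<bar>"

definition rn_divT where
  "rn_divT s e f g u v =
     (pd1 (\<lambda>a b. rn_rootdet s e f g a b * rn_T1 s e f g a b) u v
      + pd2 (\<lambda>a b. rn_rootdet s e f g a b * rn_T2 s e f g a b) u v)
     / rn_rootdet s e f g u v"

end

theory Submission
  imports Defs
begin


declare vderiv_n.simps(2)[simp del]
declare One_nat_def[simp del]

lemma triple_comp: "triple a b c = a$1*(b$2*c$3 - b$3*c$2) + a$2*(b$3*c$1 - b$1*c$3) + a$3*(b$1*c$2-b$2*c$1)"
  by (simp add: triple_def cross3_simps)
lemma inner3: "(a::real^3) \<bullet> b = a$1*b$1+a$2*b$2+a$3*b$3"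
  by (simp add: inner_vec_def sum_3)
lemma triple_gram: "triple a b c * triple x y z =
   (a\<bullet>x)*((b\<bullet>y)*(c\<bullet>z) - (b\<bullet>z)*(c\<bullet>y)) - (a\<bullet>y)*((b\<bullet>x)*(c\<bullet>z) - (b\<bullet>z)*(c\<bullet>x))
   + (a\<bullet>z)*((b\<bullet>x)*(c\<bullet>y) - (b\<bullet>y)*(c\<bullet>x))"
  unfolding triple_comp inner3 by algebra
lemma triple_four: "triple a b c * (d \<bullet> d) = (a\<bullet>d)*triple d b c + (b\<bullet>d)*triple a d c + (c\<bullet>d)*triple a b d"
  unfolding triple_comp inner3 by algebra
lemma triple_lin: "triple (a + r *\<^sub>R a') b (c + r *\<^sub>R c') = triple a b c + r * triple a' b c + r * triple a b c' + r*r*triple a' b c'"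
  unfolding triple_comp by (simp add: algebra_simps)
lemma triple_swap12: "triple a b c = - triple b a c" unfolding triple_comp by algebra
lemma triple_swap23: "triple a b c = - triple a c b" unfolding triple_comp by algebra
lemma triple_cyc: "triple a b c = triple b c a" unfolding triple_comp by algebra
lemma triple_rep: "triple a a c = 0" "triple a c a = 0" "triple c a a = 0" unfolding triple_comp by algebra+
lemma cross_dot_triple: "(cross3 p q) \<bullet> x = triple p q x"
  unfolding triple_comp inner3 by (simp add: cross3_simps)

lemma bb_cross: "bounded_bilinear (cross3)"
  using bilinear_cross bilinear_conv_bounded_bilinear by blast

lemma has_vd_triple:
  assumes "(a has_vector_derivative a') (at t)" "(b has_vector_derivative b') (at t)"
    "(c has_vector_derivative c') (at t)"
  shows "((\<lambda>x. triple (a x) (b x) (c x)) has_real_derivative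
     (triple a' (b t) (c t) + triple (a t) b' (c t) + triple (a t) (b t) c')) (at t)"
proof -
  have 1: "((\<lambda>x. cross3 (b x) (c x)) has_vector_derivative (cross3 (b t) c' + cross3 b' (c t))) (at t)"
    using bounded_bilinear.has_vector_derivative[OF bb_cross assms(2,3)] .
  have 2: "((\<lambda>x. a x \<bullet> cross3 (b x) (c x)) has_vector_derivative (a t \<bullet> (cross3 (b t) c' + cross3 b' (c t)) + a' \<bullet> cross3 (b t) (c t))) (at t)"
    using bounded_bilinear.has_vector_derivative[OF bounded_bilinear_inner assms(1) 1] .
  show ?thesis unfolding has_real_derivative_iff_has_vector_derivative triple_def
    by (rule has_vector_derivative_eq_rhs[OF 2]) (simp add: inner_add_right)
qed

lemma has_vd_inner:
  assumes "(a has_vector_derivative a') (at t)" "(b has_vector_derivative b') (at t)"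
  shows "((\<lambda>x. (a x::real^3) \<bullet> b x) has_real_derivative (a' \<bullet> b t + a t \<bullet> b')) (at t)"
  unfolding has_real_derivative_iff_has_vector_derivative
  by (rule has_vector_derivative_eq_rhs[OF bounded_bilinear.has_vector_derivative[OF bounded_bilinear_inner assms]])
    (simp add: inner_commute)

lemma deriv_const_on_open:
  assumes "open I" "u \<in> I" "\<forall>t\<in>I. \<phi> t = c" "(\<phi> has_real_derivative D) (at u)"
  shows "D = 0"
proof -
  have "((\<lambda>t. c) has_real_derivative 0) (at u)" by simp
  then have "(\<phi> has_real_derivative 0) (at u)"
    by (rule has_field_derivative_transform_within_open[OF _ assms(1,2)]) (use assms(3) in auto)
  then show ?thesis using assms(4) DERIV_unique by blast
qed

lemma Ck3_derivs:
  assumes "Ck_on 3 I s" "t \<in> I"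
  shows "(s has_vector_derivative vderiv_n 1 s t) (at t)"
    "(vderiv_n 1 s has_vector_derivative vderiv_n 2 s t) (at t)"
    "(vderiv_n 2 s has_vector_derivative vderiv_n 3 s t) (at t)"
proof -
  have h: "\<And>j. j < 3 \<Longrightarrow> (vderiv_n j s has_vector_derivative vderiv_n (Suc j) s t) (at t)"
    using assms unfolding Ck_on_def by blast
  show "(s has_vector_derivative vderiv_n 1 s t) (at t)" using h[of 0] by (simp add: One_nat_def)
  show "(vderiv_n 1 s has_vector_derivative vderiv_n 2 s t) (at t)" using h[of 1] by (simp add: numeral_2_eq_2)
  show "(vderiv_n 2 s has_vector_derivative vderiv_n 3 s t) (at t)" using h[of 2] by (simp add: numeral_3_eq_3 numeral_2_eq_2)
qed

lemma Ck1_deriv: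
  assumes "Ck_on 1 I f" "t \<in> I"
  shows "(f has_real_derivative vderiv_n 1 f t) (at t)"
  using assms unfolding Ck_on_def has_real_derivative_iff_has_vector_derivative by (auto simp: One_nat_def)

lemma DERIV_abs_nz:
  assumes "(f has_real_derivative D) (at x within S)" "f x \<noteq> 0"
  shows "((\<lambda>t. \<bar>f t\<bar>) has_real_derivative sgn (f x) * D) (at x within S)"
proof -
  have "((\<lambda>t. sqrt ((f t)^2)) has_real_derivative (inverse (sqrt ((f x)^2)) / 2) * (2 * f x * D)) (at x within S)"
    by (rule DERIV_chain2[OF DERIV_real_sqrt]) (use assms in \<open>auto intro!: derivative_eq_intros\<close>)
  moreover have "(inverse (sqrt ((f x)^2)) / 2) * (2 * f x * D) = sgn (f x) * D"
    using assms(2) by (simp add: field_simps sgn_if)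
  ultimately show ?thesis by (simp only: real_sqrt_abs)
qed


lemma pd1_rsurf:
  assumes "Ck_on 3 I s" "Ck_on 3 I e" "t \<in> I"
  shows "pd1 (rsurf s e) t v = vderiv_n 1 s t + v *\<^sub>R vderiv_n 1 e t"
  unfolding pd1_def rsurf_def
  by (rule vector_derivative_at)
    (auto intro!: derivative_eq_intros Ck3_derivs[OF assms(1,3)] Ck3_derivs[OF assms(2,3)])

lemma pd2_rsurf: "pd2 (rsurf s e) t v = e t"
  unfolding pd2_def rsurf_def
  by (rule vector_derivative_at) (auto intro!: derivative_eq_intros)

lemma pd11_rsurf:
  assumes "Ck_on 3 I s" "Ck_on 3 I e" "t \<in> I" "open I"
  shows "pd1 (pd1 (rsurf s e)) t v = vderiv_n 2 s t + v *\<^sub>R vderiv_n 2 e t"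
  unfolding pd1_def[of "pd1 (rsurf s e)"]
proof (rule vector_derivative_at)
  have "((\<lambda>t. vderiv_n 1 s t + v *\<^sub>R vderiv_n 1 e t) has_vector_derivative
         vderiv_n 2 s t + v *\<^sub>R vderiv_n 2 e t) (at t)"
    by (auto intro!: derivative_eq_intros Ck3_derivs[OF assms(1,3)] Ck3_derivs[OF assms(2,3)])
  then show "((\<lambda>t. pd1 (rsurf s e) t v) has_vector_derivative vderiv_n 2 s t + v *\<^sub>R vderiv_n 2 e t) (at t)"
    by (rule has_vector_derivative_transform_within_open[OF _ assms(4,3)])
       (simp add: pd1_rsurf[OF assms(1,2)])
qed

lemma pd21_rsurf:
  assumes "Ck_on 3 I s" "Ck_on 3 I e" "t \<in> I"
  shows "pd2 (pd1 (rsurf s e)) t v = vderiv_n 1 e t"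
  unfolding pd2_def[of "pd1 (rsurf s e)"] pd1_rsurf[OF assms]
  by (rule vector_derivative_at) (auto intro!: derivative_eq_intros)

lemma pd22_rsurf: "pd2 (pd2 (rsurf s e)) t v = 0"
  unfolding pd2_def[of "pd2 (rsurf s e)"] pd2_rsurf
  by (rule vector_derivative_at) (auto intro!: derivative_eq_intros)

lemma h22_zero: "rs_h22 s e u v = 0"
  by (simp add: rs_h22_def pd22_rsurf)

lemma G22_zero: "rn_G22 s e f g = (\<lambda>u v. 0)"
  by (intro ext) (simp add: rn_G22_def h22_zero)

lemma geom:
  fixes s e :: "real \<Rightarrow> real^3"
  assumes I: "open I" and reg: "Ck_on 3 I s" "Ck_on 3 I e"
    and std: "\<forall>u\<in>I. norm (e u) = 1 \<and> norm (vderiv_n 1 e u) = 1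
                     \<and> vderiv_n 1 s u \<bullet> vderiv_n 1 e u = 0"
    and skew: "\<forall>u\<in>I. rs_delta s e u \<noteq> 0" and u: "u \<in> I"
  shows "(rs_delta s e has_real_derivative triple (vderiv_n 2 s u) (e u) (vderiv_n 1 e u)) (at u)"
    and "rs_w s e u b > 0"
    and "rs_h11 s e u b * rs_w s e u b =
          rs_delta s e u * (vderiv_n 1 s u \<bullet> e u) - rs_kappa e u * (rs_delta s e u)^2
          - triple (vderiv_n 2 s u) (e u) (vderiv_n 1 e u) * b - rs_kappa e u * b^2"
    and "rs_h12 s e u b * rs_w s e u b = rs_delta s e u"
    and "rs_lambda s e u = (vderiv_n 1 s u \<bullet> e u) / \<bar>rs_delta s e u\<bar>"
proof -
  let ?s1 = "vderiv_n 1 s" and ?s2 = "vderiv_n 2 s" and ?e1 = "vderiv_n 1 e" and ?e2 = "vderiv_n 2 e"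
  have ee: "\<forall>t\<in>I. e t \<bullet> e t = 1" "\<forall>t\<in>I. ?e1 t \<bullet> ?e1 t = 1" "\<forall>t\<in>I. ?s1 t \<bullet> ?e1 t = 0"
    using std by (auto simp: norm_eq_1)
  have ee1: "\<forall>t\<in>I. e t \<bullet> ?e1 t = 0"
  proof
    fix t assume t: "t \<in> I"
    have "?e1 t \<bullet> e t + e t \<bullet> ?e1 t = 0"
      by (rule deriv_const_on_open[OF I t ee(1)])
         (rule has_vd_inner[OF Ck3_derivs(1)[OF reg(2) t] Ck3_derivs(1)[OF reg(2) t]])
    then show "e t \<bullet> ?e1 t = 0" by (simp add: inner_commute)
  qed
  have ee2: "?e1 u \<bullet> ?e1 u + e u \<bullet> ?e2 u = 0"
    by (rule deriv_const_on_open[OF I u ee1])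
       (rule has_vd_inner[OF Ck3_derivs(1)[OF reg(2) u] Ck3_derivs(2)[OF reg(2) u]])
  have e1e2: "?e1 u \<bullet> ?e2 u = 0"
  proof -
    have "?e2 u \<bullet> ?e1 u + ?e1 u \<bullet> ?e2 u = 0"
      by (rule deriv_const_on_open[OF I u ee(2)])
         (rule has_vd_inner[OF Ck3_derivs(2)[OF reg(2) u] Ck3_derivs(2)[OF reg(2) u]])
    then show ?thesis by (simp add: inner_commute)
  qed
  have s2e1: "?s2 u \<bullet> ?e1 u + ?s1 u \<bullet> ?e2 u = 0"
    by (rule deriv_const_on_open[OF I u ee(3)])
       (rule has_vd_inner[OF Ck3_derivs(2)[OF reg(1) u] Ck3_derivs(2)[OF reg(2) u]])
  have eu: "e u \<bullet> e u = 1" "?e1 u \<bullet> ?e1 u = 1" "?s1 u \<bullet> ?e1 u = 0" "e u \<bullet> ?e1 u = 0"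
    using ee ee1 u by auto
  have eu2: "e u \<bullet> ?e2 u = -1" using ee2 eu by simp
  define d where "d = rs_delta s e u"
  define k where "k = rs_kappa e u"
  define sg where "sg = ?s1 u \<bullet> e u"
  have d_def': "d = triple (?s1 u) (e u) (?e1 u)" by (simp add: d_def rs_delta_def)
  have k_def': "k = triple (e u) (?e1 u) (?e2 u)" by (simp add: k_def rs_kappa_def)
  have t_s1_e_e2: "triple (?s1 u) (e u) (?e2 u) = 0"
    using triple_four[of "?s1 u" "e u" "?e2 u" "?e1 u"] eu e1e2 by (simp add: inner_commute)
  have s1e2: "?s1 u \<bullet> ?e2 u = k * d - sg"
    using triple_gram[of "e u" "?e1 u" "?e2 u" "?s1 u" "e u" "?e1 u"] eu eu2 e1e2
    unfolding k_def'[symmetric] d_def'[symmetric] sg_def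
    by (simp add: inner_commute)
  have t_s1_e_s2: "triple (?s1 u) (e u) (?s2 u) = d * sg - k * d^2"
  proof -
    have "triple (?s1 u) (e u) (?s2 u) = (?s2 u \<bullet> ?e1 u) * d"
      using triple_four[of "?s1 u" "e u" "?s2 u" "?e1 u"] eu unfolding d_def'
      by (simp add: inner_commute)
    also have "?s2 u \<bullet> ?e1 u = sg - k * d" using s2e1 s1e2 by linarith
    also have "(sg - k * d) * d = d * sg - k * d^2" by (simp add: power2_eq_square algebra_simps)
    finally show ?thesis .
  qed
  show dd: "(rs_delta s e has_real_derivative triple (?s2 u) (e u) (?e1 u)) (at u)"
  proof -
    have "((\<lambda>t. triple (?s1 t) (e t) (?e1 t)) has_real_derivative
       triple (?s2 u) (e u) (?e1 u) + triple (?s1 u) (?e1 u) (?e1 u) + triple (?s1 u) (e u) (?e2 u)) (at u)"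
      by (rule has_vd_triple[OF Ck3_derivs(2)[OF reg(1) u] Ck3_derivs(1)[OF reg(2) u] Ck3_derivs(2)[OF reg(2) u]])
    then show ?thesis using t_s1_e_e2 by (simp add: triple_rep rs_delta_def[abs_def])
  qed
  have nsq: "?s1 u \<bullet> ?s1 u = d^2 + sg^2"
    using triple_gram[of "?s1 u" "e u" "?e1 u" "?s1 u" "e u" "?e1 u"] eu
    unfolding d_def'[symmetric] sg_def by (simp add: inner_commute power2_eq_square)
  have dnz: "d \<noteq> 0" using skew u d_def by auto
  show wpos: "rs_w s e u b > 0" unfolding rs_w_def d_def[symmetric] using dnz by (simp add: add_pos_nonneg)
  define N where "N = cross3 (?s1 u + b *\<^sub>R ?e1 u) (e u)"
  have nN: "norm N = rs_w s e u b"
  proof -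
    have "(norm N)^2 + ((?s1 u + b *\<^sub>R ?e1 u) \<bullet> e u)^2 = (norm (?s1 u + b *\<^sub>R ?e1 u) * norm (e u))^2"
      unfolding N_def by (rule norm_cross_dot)
    moreover have "(norm (?s1 u + b *\<^sub>R ?e1 u))^2 = d^2 + sg^2 + b^2"
      unfolding power2_norm_eq_inner using eu nsq by (simp add: algebra_simps inner_commute power2_eq_square)
    moreover have "(norm (e u))^2 = 1" unfolding power2_norm_eq_inner using eu by simp
    moreover have "(?s1 u + b *\<^sub>R ?e1 u) \<bullet> e u = sg" using eu by (simp add: sg_def algebra_simps inner_commute)
    ultimately have "(norm N)^2 = d^2 + b^2" by (simp add: power_mult_distrib)
    then show ?thesis unfolding rs_w_def d_def[symmetric] by (metis norm_ge_zero real_sqrt_unique)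
  qed
  have xi: "rs_xi s e u b = (1 / rs_w s e u b) *\<^sub>R N"
    unfolding rs_xi_def pd1_rsurf[OF reg u] pd2_rsurf N_def[symmetric] Let_def nN ..
  show "rs_h11 s e u b * rs_w s e u b =
          rs_delta s e u * (vderiv_n 1 s u \<bullet> e u) - rs_kappa e u * (rs_delta s e u)^2
          - triple (vderiv_n 2 s u) (e u) (vderiv_n 1 e u) * b - rs_kappa e u * b^2"
  proof -
    have "rs_h11 s e u b * rs_w s e u b = N \<bullet> (?s2 u + b *\<^sub>R ?e2 u)"
      unfolding rs_h11_def xi pd11_rsurf[OF reg u I] using wpos by simp
    also have "\<dots> = triple (?s1 u + b *\<^sub>R ?e1 u) (e u) (?s2 u + b *\<^sub>R ?e2 u)"
      unfolding N_def cross_dot_triple ..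
    also have "\<dots> = triple (?s1 u) (e u) (?s2 u) + b * triple (?e1 u) (e u) (?s2 u) + b * triple (?s1 u) (e u) (?e2 u) + b*b*triple (?e1 u) (e u) (?e2 u)"
      by (rule triple_lin)
    also have "triple (?e1 u) (e u) (?s2 u) = - triple (?s2 u) (e u) (?e1 u)"
      by (metis triple_cyc triple_swap23)
    also have "triple (?e1 u) (e u) (?e2 u) = - k" unfolding k_def' by (metis triple_swap12)
    finally show ?thesis using t_s1_e_s2 t_s1_e_e2
      by (simp add: d_def[symmetric] k_def[symmetric] sg_def[symmetric] power2_eq_square)
  qed
  show "rs_h12 s e u b * rs_w s e u b = rs_delta s e u"
  proof -
    have "rs_h12 s e u b * rs_w s e u b = N \<bullet> ?e1 u"
      unfolding rs_h12_def xi pd21_rsurf[OF reg u] using wpos by simp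
    also have "\<dots> = triple (?s1 u + b *\<^sub>R ?e1 u) (e u) (?e1 u)"
      unfolding N_def cross_dot_triple ..
    also have "\<dots> = d" unfolding triple_comp d_def' by (simp add: algebra_simps)
    finally show ?thesis by (simp add: d_def)
  qed
  show "rs_lambda s e u = (vderiv_n 1 s u \<bullet> e u) / \<bar>rs_delta s e u\<bar>"
  proof -
    define n where "n = norm (?s1 u)"
    have n2: "n^2 = d^2 + sg^2" unfolding n_def power2_norm_eq_inner nsq ..
    have npos: "n > 0" using n2 dnz
      by (metis n_def norm_eq_zero norm_ge_zero order_le_less power2_eq_square sum_power2_eq_zero_iff
          zero_power2 less_irrefl)
    define c where "c = sg / n"
    have nu: "norm (e u) = 1" using std u by auto
    have ang: "vec_angle (e u) (?s1 u) = arccos c"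
      unfolding vec_angle_def c_def sg_def n_def nu by (simp add: inner_commute)
    have c2: "1 - c^2 = (d / n)^2" proof -
      have "n^2 > 0" using npos by simp
      then have "1 - c^2 = (n^2 - sg^2)/n^2" unfolding c_def power_divide by (simp add: diff_divide_distrib)
      also have "\<dots> = d^2/n^2" by (simp add: n2)
      finally show ?thesis by (simp add: power_divide)
    qed
    have cb: "-1 \<le> c \<and> c \<le> 1"
    proof -
      have "c^2 \<le> 1" using c2 by (smt (verit) zero_le_power2)
      then have "\<bar>c\<bar> \<le> 1" by (metis abs_le_square_iff abs_one one_power2)
      then show ?thesis by auto
    qed
    have "sin (arccos c) = sqrt (1 - c^2)" using cb by (simp add: sin_arccos)
    also have "\<dots> = \<bar>d\<bar> / n" unfolding c2 real_sqrt_abs using npos by simp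
    finally have sn: "sin (arccos c) = \<bar>d\<bar> / n" .
    have "rs_lambda s e u = cos (arccos c) / sin (arccos c)"
      unfolding rs_lambda_def ang cot_def ..
    also have "\<dots> = sg / \<bar>d\<bar>" unfolding sn using cb npos dnz by (simp add: c_def)
    finally show ?thesis by (simp add: sg_def d_def)
  qed
qed



lemma vd_real: "(\<phi> has_real_derivative D) (at x) \<Longrightarrow> vector_derivative \<phi> (at x) = D"
  by (simp add: has_real_derivative_iff_has_vector_derivative vector_derivative_at)

lemma openP: "open {b::real. p + q*b \<noteq> 0}"
  by (rule open_Collect_neq) (auto intro!: continuous_intros)

lemma curv_G0:
  "metric_curvature EE FF (\<lambda>u v. 0) u v =
    ((- pd2 (pd2 EE) u v / 2 + pd2 (pd1 FF) u v) * (-((FF u v)^2))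
     + (pd1 FF u v - pd2 EE u v / 2) * (pd2 FF u v * FF u v)) / ((FF u v)^2)^2"
proof -
  have z: "pd1 (\<lambda>u v. 0::real) = (\<lambda>u v. 0)" "pd2 (\<lambda>u v. 0::real) = (\<lambda>u v. 0)"
    by (auto simp: pd1_def pd2_def intro!: ext vd_real)
  show ?thesis unfolding metric_curvature_def Let_def z
    by (simp add: power2_eq_square)
qed

lemma S_formula:
  fixes EE FF :: "real \<Rightarrow> real \<Rightarrow> real"
  assumes EE: "\<forall>b. EE u b = (aZ + aY*b + aX*b^2)/(ff u + gg u * b)"
    and FF: "\<forall>t\<in>J. \<forall>b. FF t b = dd t / (ff t + gg t * b)"
    and J: "open J" "u \<in> J"
    and dd: "(dd has_real_derivative d1) (at u)"
    and ff: "(ff has_real_derivative f1) (at u)"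
    and gg: "(gg has_real_derivative g1) (at u)"
    and P: "ff u + gg u * v \<noteq> 0" and dnz: "dd u \<noteq> 0"
  shows "metric_curvature EE FF (\<lambda>u v. 0) u v =
    (dd u * (g1 * ff u - gg u * f1) + aX * (ff u)^2 + aX * ff u * gg u * v + aX * (gg u)^2 * v^2 / 2
     - aY * ff u * gg u / 2 + aZ * (gg u)^2 / 2) / ((dd u)^2 * (ff u + gg u * v))"
proof -
  define f0 where "f0 = ff u"
  define g0 where "g0 = gg u"
  define d where "d = dd u"
  define W where "W = {b. f0 + g0 * b \<noteq> 0}"
  have W: "open W" "v \<in> W" using openP P by (auto simp: W_def f0_def g0_def)
  have Ev: "pd2 EE u b = ((aY + 2*aX*b) * (f0 + g0*b) - (aZ + aY*b + aX*b^2) * g0)/(f0 + g0*b)^2"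
    if "b \<in> W" for b
    unfolding pd2_def EE[rule_format] f0_def[symmetric] g0_def[symmetric]
    apply (rule vd_real)
    using that unfolding W_def
    by (auto intro!: derivative_eq_intros) (auto simp: divide_simps power2_eq_square power3_eq_cube; algebra)
  have Evv: "pd2 (pd2 EE) u v = 2*aX/(f0+g0* v) - 2*g0*(aY+2*aX* v)/(f0+g0* v)^2 + 2*g0^2*(aZ + aY* v + aX* v^2)/(f0+g0* v)^3"
    unfolding pd2_def[of "pd2 EE"]
  proof (rule vd_real)
    have "((\<lambda>b. ((aY + 2*aX*b) * (f0 + g0*b) - (aZ + aY*b + aX*b^2) * g0)/(f0 + g0*b)^2) has_real_derivative
      2*aX/(f0+g0* v) - 2*g0*(aY+2*aX* v)/(f0+g0* v)^2 + 2*g0^2*(aZ + aY* v + aX* v^2)/(f0+g0* v)^3) (at v)"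
      using W(2) unfolding W_def
      by (auto intro!: derivative_eq_intros) (auto simp: divide_simps power2_eq_square power3_eq_cube; algebra) 
    then show "((\<lambda>b. pd2 EE u b) has_real_derivative
      2*aX/(f0+g0* v) - 2*g0*(aY+2*aX* v)/(f0+g0* v)^2 + 2*g0^2*(aZ + aY* v + aX* v^2)/(f0+g0* v)^3) (at v)"
      by (rule has_field_derivative_transform_within_open[OF _ W]) (simp add: Ev)
  qed
  have P0: "f0 + g0* v \<noteq> 0" using P by (simp add: f0_def g0_def)
  have Fuv: "FF u v = d / (f0 + g0* v)" using FF J by (simp add: d_def f0_def g0_def)
  have Fv: "pd2 FF u v = - d * g0 / (f0 + g0* v)^2"
  proof -
    have "FF u = (\<lambda>b. d/(f0+g0*b))" using FF J by (auto simp: d_def f0_def g0_def)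
    moreover have "((\<lambda>b. d/(f0+g0*b)) has_real_derivative - d * g0 / (f0 + g0* v)^2) (at v)"
      using P0 by (auto intro!: derivative_eq_intros) (auto simp: divide_simps power2_eq_square power3_eq_cube; algebra)
    ultimately show ?thesis unfolding pd2_def by (simp add: vd_real)
  qed
  have Fu: "pd1 FF u b = (d1 * (f0 + g0*b) - d * (f1 + g1*b))/(f0+g0*b)^2" if "b \<in> W" for b
    unfolding pd1_def
  proof (rule vd_real)
    have "((\<lambda>t. dd t / (ff t + gg t * b)) has_real_derivative (d1 * (f0 + g0*b) - d * (f1 + g1*b))/(f0+g0*b)^2) (at u)"
      using that unfolding W_def f0_def g0_def d_def
      by (auto intro!: derivative_eq_intros dd ff gg) (auto simp: divide_simps power2_eq_square power3_eq_cube; algebra)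
    then show "((\<lambda>t. FF t b) has_real_derivative (d1 * (f0 + g0*b) - d * (f1 + g1*b))/(f0+g0*b)^2) (at u)"
      by (rule has_field_derivative_transform_within_open[OF _ J]) (simp add: FF)
  qed
  have Fuv': "pd2 (pd1 FF) u v = - d1*g0/(f0+g0* v)^2 - d*g1/(f0+g0* v)^2 + 2*d*g0*(f1+g1* v)/(f0+g0* v)^3"
    unfolding pd2_def[of "pd1 FF"]
  proof (rule vd_real)
    have "((\<lambda>b. (d1 * (f0 + g0*b) - d * (f1 + g1*b))/(f0+g0*b)^2) has_real_derivative
       - d1*g0/(f0+g0* v)^2 - d*g1/(f0+g0* v)^2 + 2*d*g0*(f1+g1* v)/(f0+g0* v)^3) (at v)"
      using W(2) unfolding W_def
      by (auto intro!: derivative_eq_intros) (auto simp: divide_simps power2_eq_square power3_eq_cube; algebra) 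
    then show "((\<lambda>b. pd1 FF u b) has_real_derivative
       - d1*g0/(f0+g0* v)^2 - d*g1/(f0+g0* v)^2 + 2*d*g0*(f1+g1* v)/(f0+g0* v)^3) (at v)"
      by (rule has_field_derivative_transform_within_open[OF _ W]) (simp add: Fu)
  qed
  have P0: "f0 + g0* v \<noteq> 0" using P by (simp add: f0_def g0_def)
  have d0: "d \<noteq> 0" using dnz by (simp add: d_def)
  show ?thesis
    unfolding curv_G0 Evv Fuv Fv Fuv' Ev[OF W(2)] Fu[OF W(2)]
    unfolding f0_def[symmetric] g0_def[symmetric] d_def[symmetric]
    using P0 d0 by (simp add: divide_simps power2_eq_square power3_eq_cube; algebra)
qed


lemma pd2_q:
  assumes "rs_delta s e t \<noteq> 0"
  shows "pd2 (rn_q s e f g) t b = (g t * (rs_w s e t b)^2 - (f t + g t * b) * b) / (rs_w s e t b)^3"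
proof -
  define d where "d = rs_delta s e t"
  have pos: "d^2 + b^2 > 0" using assms by (simp add: d_def add_pos_nonneg)
  have w: "rs_w s e t b = sqrt (d^2 + b^2)" by (simp add: rs_w_def d_def)
  have "((\<lambda>b. (f t + g t * b) / sqrt (d^2 + b^2)) has_real_derivative
          (g t * (sqrt (d^2 + b^2))^2 - (f t + g t * b) * b) / (sqrt (d^2 + b^2))^3) (at b)"
    using pos
    by (auto intro!: derivative_eq_intros)
       (auto simp: divide_simps power2_eq_square power3_eq_cube real_sqrt_mult[symmetric])
  then show ?thesis unfolding pd2_def rn_q_def rs_w_def d_def[symmetric] by (simp add: vd_real)
qed


lemma pd1_q:
  assumes "rs_delta s e u \<noteq> 0" and dd: "(rs_delta s e has_real_derivative d1) (at u)"
    and ff: "(f has_real_derivative f1) (at u)" and gg: "(g has_real_derivative g1) (at u)"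
  shows "pd1 (rn_q s e f g) u b = ((f1 + g1 * b) * (rs_w s e u b)^2 - (f u + g u * b) * rs_delta s e u * d1) / (rs_w s e u b)^3"
proof -
  define d where "d = rs_delta s e u"
  have pos: "d^2 + b^2 > 0" using assms by (simp add: d_def add_pos_nonneg)
  have w: "rs_w s e u b = sqrt (d^2 + b^2)" by (simp add: rs_w_def d_def)
  have "((\<lambda>t. (f t + g t * b) / sqrt ((rs_delta s e t)^2 + b^2)) has_real_derivative
          ((f1 + g1 * b) * (sqrt (d^2 + b^2))^2 - (f u + g u * b) * d * d1) / (sqrt (d^2 + b^2))^3) (at u)"
    using pos unfolding d_def
    by (auto intro!: derivative_eq_intros dd ff gg)
       (auto simp: divide_simps power2_eq_square power3_eq_cube real_sqrt_mult[symmetric])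
  then show ?thesis unfolding pd1_def rn_q_def rs_w_def d_def by (simp add: vd_real)
qed

lemma T1_eq:
  assumes "rs_delta s e t \<noteq> 0"
  shows "rn_T1 s e f g t b = g t / rs_delta s e t"
proof -
  define d where "d = rs_delta s e t"
  define w where "w = rs_w s e t b"
  have w2: "w^2 = d^2 + b^2" unfolding w_def rs_w_def d_def by (simp add: add_pos_nonneg)
  have wpos: "w > 0" unfolding w_def rs_w_def using assms by (simp add: add_pos_nonneg)
  show ?thesis unfolding rn_T1_def Let_def pd2_q[OF assms] rn_q_def w_def[symmetric] d_def[symmetric]
    using wpos assms unfolding d_def[symmetric]
    by (simp add: divide_simps power2_eq_square power3_eq_cube; algebra)
qed

lemma T2_eq:
  assumes "rs_delta s e u \<noteq> 0" and dd: "(rs_delta s e has_real_derivative d1) (at u)"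
    and ff: "(f has_real_derivative f1) (at u)" and gg: "(g has_real_derivative g1) (at u)"
    and Q: "rs_h11 s e u b * rs_w s e u b = Qb"
  shows "rn_T2 s e f g u b = (2 * rs_delta s e u * (f1 + g1 * b) - d1 * (f u + g u * b)) / (2 * (rs_delta s e u)^2)
           - g u * Qb / (rs_delta s e u)^2"
proof -
  define d where "d = rs_delta s e u"
  define w where "w = rs_w s e u b"
  have w2: "w^2 = d^2 + b^2" unfolding w_def rs_w_def d_def by (simp add: add_pos_nonneg)
  have wpos: "w > 0" unfolding w_def rs_w_def using assms by (simp add: add_pos_nonneg)
  have dv: "deriv (rs_delta s e) u = d1" using dd by (rule DERIV_imp_deriv)
  have h: "rs_h11 s e u b = Qb / w" using Q wpos unfolding w_def by (simp add: field_simps)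
  show ?thesis unfolding rn_T2_def Let_def pd1_q[OF assms(1-4)] T1_eq[OF assms(1)] rn_q_def dv h
      w_def[symmetric] d_def[symmetric]
    using wpos assms(1) w2 unfolding d_def[symmetric]
    by (simp add: divide_simps power2_eq_square power3_eq_cube; algebra)
qed


lemma DERIV_abs_eqI:
  "(f has_real_derivative D) (at x within S) \<Longrightarrow> f x \<noteq> 0 \<Longrightarrow> E = sgn (f x) * D \<Longrightarrow>
   ((\<lambda>t. \<bar>f t\<bar>) has_real_derivative E) (at x within S)"
  using DERIV_abs_nz by blast

lemma rootdet_eq: "rn_rootdet s e f g t b = \<bar>rn_G12 s e f g t b\<bar>"
  unfolding rn_rootdet_def G22_zero by simp

lemma divT_formula:
  assumes J: "open J" "u \<in> J" and dnz: "\<forall>t\<in>J. rs_delta s e t \<noteq> 0"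
    and dd: "(rs_delta s e has_real_derivative d1) (at u)"
    and ff: "(f has_real_derivative f1) (at u)" and gg: "(g has_real_derivative g1) (at u)"
    and Q: "\<forall>b. rs_h11 s e u b * rs_w s e u b = a0 + a1 * b + a2 * b^2"
    and G12: "\<forall>t\<in>J. \<forall>b. rn_G12 s e f g t b = rs_delta s e t / (f t + g t * b)"
    and P: "f u + g u * v \<noteq> 0"
  shows "rn_divT s e f g u v =
    (2 * rs_delta s e u * (g1 * f u - g u * f1)
     - g u * ((a1 + 2 * a2 * v) * (f u + g u * v) - g u * (a0 + a1 * v + a2 * v^2)))
    / ((rs_delta s e u)^2 * (f u + g u * v))"
proof -
  define d where "d = rs_delta s e u"
  define f0 where "f0 = f u"
  define g0 where "g0 = g u"
  have d0: "d \<noteq> 0" using dnz J by (simp add: d_def)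
  have P0: "f0 + g0 * v \<noteq> 0" using P by (simp add: f0_def g0_def)
  have R: "rn_rootdet s e f g t b = \<bar>rs_delta s e t / (f t + g t * b)\<bar>" if "t \<in> J" for t b
    using G12 that by (simp add: rootdet_eq)
  have X1: "pd1 (\<lambda>a b. rn_rootdet s e f g a b * rn_T1 s e f g a b) u v =
     sgn (d / (f0 + g0 * v)) * ((d1 * (f0 + g0 * v) - d * (f1 + g1 * v)) / (f0 + g0 * v)^2) * (g0 / d)
     + \<bar>d / (f0 + g0 * v)\<bar> * ((g1 * d - g0 * d1) / d^2)"
    unfolding pd1_def
  proof (rule vd_real)
    have "((\<lambda>t. \<bar>rs_delta s e t / (f t + g t * v)\<bar> * (g t / rs_delta s e t)) has_real_derivative
     sgn (d / (f0 + g0 * v)) * ((d1 * (f0 + g0 * v) - d * (f1 + g1 * v)) / (f0 + g0 * v)^2) * (g0 / d)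
     + \<bar>d / (f0 + g0 * v)\<bar> * ((g1 * d - g0 * d1) / d^2)) (at u)"
      using P0 d0 unfolding d_def f0_def g0_def
      by (auto intro!: derivative_eq_intros DERIV_abs_eqI dd ff gg)
         (auto simp: divide_simps power2_eq_square power3_eq_cube sgn_if abs_if; algebra)
    then show "((\<lambda>t. rn_rootdet s e f g t v * rn_T1 s e f g t v) has_real_derivative
     sgn (d / (f0 + g0 * v)) * ((d1 * (f0 + g0 * v) - d * (f1 + g1 * v)) / (f0 + g0 * v)^2) * (g0 / d)
     + \<bar>d / (f0 + g0 * v)\<bar> * ((g1 * d - g0 * d1) / d^2)) (at u)"
      by (rule has_field_derivative_transform_within_open[OF _ J]) (use dnz in \<open>simp add: R T1_eq\<close>)
  qed
  have T2: "rn_T2 s e f g u b = (2 * d * (f1 + g1 * b) - d1 * (f0 + g0 * b)) / (2 * d^2)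
           - g0 * (a0 + a1 * b + a2 * b^2) / d^2" for b
    unfolding d_def f0_def g0_def by (rule T2_eq[OF d0[unfolded d_def] dd ff gg Q[rule_format]])
  have X2: "pd2 (\<lambda>a b. rn_rootdet s e f g a b * rn_T2 s e f g a b) u v =
     sgn (d / (f0 + g0 * v)) * (- d * g0 / (f0 + g0 * v)^2) *
        ((2 * d * (f1 + g1 * v) - d1 * (f0 + g0 * v)) / (2 * d^2) - g0 * (a0 + a1 * v + a2 * v^2) / d^2)
     + \<bar>d / (f0 + g0 * v)\<bar> * ((2 * d * g1 - d1 * g0) / (2 * d^2) - g0 * (a1 + 2 * a2 * v) / d^2)"
    unfolding pd2_def R[OF J(2)] T2 d_def[symmetric] f0_def[symmetric] g0_def[symmetric]
    apply (rule vd_real)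
    using P0 d0
    by (auto intro!: derivative_eq_intros DERIV_abs_eqI)
       (auto simp: divide_simps power2_eq_square power3_eq_cube sgn_if abs_if; algebra)
  have R0: "rn_rootdet s e f g u v = \<bar>d / (f0 + g0 * v)\<bar>" using R[OF J(2)] by (simp add: d_def f0_def g0_def)
  have eq: "rn_divT s e f g u v = (sgn (d / (f0 + g0 * v)) * ((d1 * (f0 + g0 * v) - d * (f1 + g1 * v)) / (f0 + g0 * v)^2) * (g0 / d)
     + \<bar>d / (f0 + g0 * v)\<bar> * ((g1 * d - g0 * d1) / d^2) +
     (sgn (d / (f0 + g0 * v)) * (- d * g0 / (f0 + g0 * v)^2) *
        ((2 * d * (f1 + g1 * v) - d1 * (f0 + g0 * v)) / (2 * d^2) - g0 * (a0 + a1 * v + a2 * v^2) / d^2)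
     + \<bar>d / (f0 + g0 * v)\<bar> * ((2 * d * g1 - d1 * g0) / (2 * d^2) - g0 * (a1 + 2 * a2 * v) / d^2)))
     / \<bar>d / (f0 + g0 * v)\<bar>"
    unfolding rn_divT_def X1 X2 R0 ..
  show ?thesis
  proof (cases "d / (f0 + g0 * v) > 0")
    case True
    then have a: "\<bar>d / (f0 + g0 * v)\<bar> = d / (f0 + g0 * v)" "sgn (d / (f0 + g0 * v)) = 1" by (simp_all only: abs_of_pos sgn_pos)
    then show "?thesis" using P0 d0 unfolding eq d_def[symmetric] f0_def[symmetric] g0_def[symmetric] a
      by (simp add: divide_simps power2_eq_square power3_eq_cube; algebra)
  next
    case False
    then have "d / (f0 + g0 * v) < 0" using P0 d0 by (simp add: less_le)
    then have a: "\<bar>d / (f0 + g0 * v)\<bar> = - (d / (f0 + g0 * v))" "sgn (d / (f0 + g0 * v)) = -1" by (simp_all only: abs_of_neg sgn_neg)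
    then show "?thesis" using P0 d0 unfolding eq d_def[symmetric] f0_def[symmetric] g0_def[symmetric] a
      by (simp add: divide_simps power2_eq_square power3_eq_cube; algebra)
  qed
qed



lemma no_zero_right:
  fixes Fc G D :: "real \<Rightarrow> real"
  assumes xy: "x < y"
    and cF: "continuous_on {x..y} Fc" and cG: "continuous_on {x..y} G" and cD: "continuous_on {x..y} D"
    and Gy: "G y \<noteq> 0"
    and nz: "\<forall>t\<in>{x..y}. G t = 0 \<longrightarrow> Fc t \<noteq> 0"
    and der: "\<forall>t\<in>{x..y}. G t \<noteq> 0 \<longrightarrow> ((\<lambda>t. Fc t / G t) has_real_derivative D t) (at t)"
  shows "\<forall>t\<in>{x..y}. G t \<noteq> 0"
proof (rule ccontr)
  assume "\<not> (\<forall>t\<in>{x..y}. G t \<noteq> 0)"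
  then have ne: "{t\<in>{x..y}. G t = 0} \<noteq> {}" by auto
  obtain M where M: "\<forall>t\<in>{x..y}. \<bar>D t\<bar> \<le> M"
  proof -
    have "compact (D ` {x..y})" by (rule compact_continuous_image[OF cD compact_Icc])
    then have "bounded (D ` {x..y})" by (rule compact_imp_bounded)
    then show ?thesis using that unfolding bounded_real by auto
  qed
  have M0: "0 \<le> M" using M xy by (meson abs_ge_zero atLeastAtMost_iff less_imp_le order_trans order_refl)
  define Zs where "Zs = {t\<in>{x..y}. G t = 0}"
  have cl: "closed Zs" unfolding Zs_def by (rule continuous_closed_preimage_constant[OF cG closed_atLeastAtMost])
  have bdd: "bdd_above Zs" unfolding Zs_def by (rule bdd_aboveI[of _ y]) auto
  define t0 where "t0 = Sup Zs"
  have t0Z: "t0 \<in> Zs" unfolding t0_def using closed_contains_Sup[OF ne[folded Zs_def] bdd cl] .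
  then have t0: "x \<le> t0" "t0 \<le> y" "G t0 = 0" unfolding Zs_def by auto
  have t0y: "t0 < y" using t0 Gy by (cases "t0 = y") auto
  have pos: "G t \<noteq> 0" if "t0 < t" "t \<le> y" for t
  proof
    assume "G t = 0"
    then have "t \<in> Zs" using that t0 unfolding Zs_def by auto
    then have "t \<le> t0" unfolding t0_def using bdd by (rule cSup_upper)
    then show False using that by simp
  qed
  define B where "B = \<bar>Fc y / G y\<bar> + M * (y - x)"
  have bound: "\<bar>Fc t\<bar> - B * \<bar>G t\<bar> \<le> 0" if "t0 < t" "t \<le> y" for t
  proof -
    have Gt: "G t \<noteq> 0" using pos that by simp
    have "\<bar>Fc t / G t\<bar> \<le> B"
    proof (cases "t = y")
      case True then show ?thesis using M0 xy by (simp add: B_def)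
    next
      case False
      then have ty: "t < y" using that by simp
      have "\<And>s. t \<le> s \<Longrightarrow> s \<le> y \<Longrightarrow> ((\<lambda>t. Fc t / G t) has_real_derivative D s) (at s)"
        using der pos that t0 by auto
      from MVT2[OF ty this] obtain z where z: "t < z" "z < y" "Fc y / G y - Fc t / G t = (y - t) * D z"
        by blast
      have "\<bar>D z\<bar> \<le> M" using M z that t0 by auto
      then have "\<bar>(y - t) * D z\<bar> \<le> (y - x) * M"
        using that t0 ty by (auto simp: abs_mult intro!: mult_mono)
      moreover have "Fc t / G t = Fc y / G y - (y - t) * D z" using z(3) by simp
      then have "\<bar>Fc t / G t\<bar> \<le> \<bar>Fc y / G y\<bar> + \<bar>(y - t) * D z\<bar>" by (metis abs_triangle_ineq4)
      ultimately show ?thesis unfolding B_def by (simp add: mult.commute)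
    qed
    then show ?thesis using Gt by (simp add: abs_divide divide_le_eq)
  qed
  define \<phi> where "\<phi> = (\<lambda>t. \<bar>Fc t\<bar> - B * \<bar>G t\<bar>)"
  have "continuous_on {x..y} \<phi>" unfolding \<phi>_def by (intro continuous_intros cF cG)
  then have "continuous_on {t0..y} \<phi>" by (rule continuous_on_subset) (use t0 in auto)
  then have lim: "(\<phi> \<longlongrightarrow> \<phi> t0) (at t0 within {t0..y})"
    using t0 unfolding continuous_on_def by auto
  have ev: "eventually (\<lambda>t. \<phi> t \<le> 0) (at t0 within {t0..y})"
    unfolding eventually_at_filter
    by (rule always_eventually) (use bound in \<open>force simp: \<phi>_def\<close>)
  have "\<phi> t0 \<le> 0"
    by (rule tendsto_upperbound[OF lim ev]) (simp add: at_within_Icc_at_right[OF t0y])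
  then have "Fc t0 = 0" using t0 by (simp add: \<phi>_def)
  then show False using nz t0 by auto
qed

lemma no_zero_left:
  fixes Fc G D :: "real \<Rightarrow> real"
  assumes xy: "x < y"
    and cF: "continuous_on {x..y} Fc" and cG: "continuous_on {x..y} G" and cD: "continuous_on {x..y} D"
    and Gx: "G x \<noteq> 0"
    and nz: "\<forall>t\<in>{x..y}. G t = 0 \<longrightarrow> Fc t \<noteq> 0"
    and der: "\<forall>t\<in>{x..y}. G t \<noteq> 0 \<longrightarrow> ((\<lambda>t. Fc t / G t) has_real_derivative D t) (at t)"
  shows "\<forall>t\<in>{x..y}. G t \<noteq> 0"
proof -
  have img: "uminus ` {-y..-x} = {x..(y::real)}" by simp
  have c: "continuous_on {-y..-x} (\<lambda>t. H (-t))" if "continuous_on {x..y} H" for H :: "real \<Rightarrow> real"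
    by (rule continuous_on_compose2[OF that]) (auto intro!: continuous_intros)
  have "\<forall>t\<in>{-y..-x}. G (-t) \<noteq> 0"
  proof (rule no_zero_right[where Fc="\<lambda>t. Fc (-t)" and D="\<lambda>t. - D (-t)"])
    show "continuous_on {-y..-x} (\<lambda>t. - D (-t))" using c[OF cD] by (intro continuous_intros)
    show "\<forall>t\<in>{-y..-x}. G (-t) \<noteq> 0 \<longrightarrow> ((\<lambda>t. Fc (-t) / G (-t)) has_real_derivative - D (-t)) (at t)"
    proof (intro ballI impI)
      fix t assume t: "t \<in> {-y..-x}" "G (-t) \<noteq> 0"
      have "((\<lambda>s. Fc s / G s) has_real_derivative D (-t)) (at (-t))" using der t by auto
      moreover have "(uminus has_real_derivative -1) (at t)" by (auto intro!: derivative_eq_intros)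
      ultimately have "((\<lambda>x. (\<lambda>s. Fc s / G s) (uminus x)) has_real_derivative D (-t) * -1) (at t)"
        by (rule DERIV_chain2[where f="\<lambda>s. Fc s / G s" and g=uminus])
      then show "((\<lambda>t. Fc (-t) / G (-t)) has_real_derivative - D (-t)) (at t)" by simp
    qed
  qed (use xy c[OF cF] c[OF cG] Gx nz in auto)
  then show ?thesis by (metis atLeastAtMost_iff minus_minus neg_le_iff_le)
qed

lemma no_zero:
  fixes Fc G D :: "real \<Rightarrow> real"
  assumes I: "is_interval I"
    and cF: "continuous_on I Fc" and cG: "continuous_on I G" and cD: "continuous_on I D"
    and ex: "\<exists>y\<in>I. G y \<noteq> 0"
    and nz: "\<forall>t\<in>I. G t = 0 \<longrightarrow> Fc t \<noteq> 0"
    and der: "\<forall>t\<in>I. G t \<noteq> 0 \<longrightarrow> ((\<lambda>t. Fc t / G t) has_real_derivative D t) (at t)"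
  shows "\<forall>t\<in>I. G t \<noteq> 0"
proof
  fix t assume t: "t \<in> I"
  obtain y where y: "y \<in> I" "G y \<noteq> 0" using ex by blast
  show "G t \<noteq> 0"
  proof (cases "t = y")
    case True then show ?thesis using y by simp
  next
    case False
    show ?thesis
    proof (cases "t < y")
      case True
      have sub: "{t..y} \<subseteq> I" using mem_is_interval_1_I[OF I t y(1)] by auto
      have nz': "\<forall>s\<in>{t..y}. G s = 0 \<longrightarrow> Fc s \<noteq> 0" using nz sub by blast
      have der': "\<forall>s\<in>{t..y}. G s \<noteq> 0 \<longrightarrow> ((\<lambda>t. Fc t / G t) has_real_derivative D s) (at s)"
        using der sub by blast
      have "\<forall>s\<in>{t..y}. G s \<noteq> 0"
        by (rule no_zero_right[OF True continuous_on_subset[OF cF sub] continuous_on_subset[OF cG sub]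
          continuous_on_subset[OF cD sub] y(2) nz' der'])
      then show ?thesis using True by simp
    next
      case False
      then have yt: "y < t" using \<open>t \<noteq> y\<close> by simp
      have sub: "{y..t} \<subseteq> I" using mem_is_interval_1_I[OF I y(1) t] by auto
      have nz': "\<forall>s\<in>{y..t}. G s = 0 \<longrightarrow> Fc s \<noteq> 0" using nz sub by blast
      have der': "\<forall>s\<in>{y..t}. G s \<noteq> 0 \<longrightarrow> ((\<lambda>t. Fc t / G t) has_real_derivative D s) (at s)"
        using der sub by blast
      have "\<forall>s\<in>{y..t}. G s \<noteq> 0"
        by (rule no_zero_left[OF yt continuous_on_subset[OF cF sub] continuous_on_subset[OF cG sub]
          continuous_on_subset[OF cD sub] y(2) nz' der'])
      then show ?thesis using yt by simp
    qed
  qed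
qed

lemma quad:
  fixes p q A B C :: real
  assumes "\<forall>v. p + q * v \<noteq> 0 \<longrightarrow> A + B * v + C * v^2 = 0" "p \<noteq> 0 \<or> q \<noteq> 0"
  shows "A = 0 \<and> B = 0 \<and> C = 0"
proof -
  define t where "t = (if q = 0 then 0 else - p / q)"
  have nz: "p + q * (t + k) \<noteq> 0" if "k \<noteq> 0" for k
  proof (cases "q = 0")
    case True then show ?thesis using assms(2) by (simp add: t_def)
  next
    case False
    then have "p + q * (t + k) = q * k" by (simp add: t_def algebra_simps)
    then show ?thesis using False that by simp
  qed
  have e1: "A + B * (t+1) + C * (t+1)^2 = 0" using assms(1) nz[of 1] by simp
  have e2: "A + B * (t+2) + C * (t+2)^2 = 0" using assms(1) nz[of 2] by simp
  have e3: "A + B * (t+3) + C * (t+3)^2 = 0" using assms(1) nz[of 3] by simp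
  have C: "C = 0" using e1 e2 e3 by algebra
  have B: "B = 0" using e1 e2 e3 by algebra
  have A: "A = 0" using e1 e2 e3 by algebra
  show ?thesis using A B C by simp
qed

lemma h_aux:
  fixes r D G F f1 g1 d1 sg :: real
  assumes "r > 0" "r * r = sg * D" "G \<noteq> 0" "D \<noteq> 0" "sg * sg = 1"
  shows "(f1 * (G * r) - F * (g1 * r + G * (inverse r / 2 * (sg * d1)))) / (G * r)^2
       = (2 * D * (f1 * G - F * g1) - d1 * F * G) / (2 * D * G^2 * r)"
  using assms by (simp add: divide_simps power2_eq_square; algebra)

lemma h_deriv:
  assumes ff: "(f has_real_derivative f1) (at t)" and gg: "(g has_real_derivative g1) (at t)"
    and dd: "(dd has_real_derivative d1) (at t)" and d0: "dd t \<noteq> 0" and g0: "g t \<noteq> 0"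
  shows "((\<lambda>t. f t / (g t * sqrt \<bar>dd t\<bar>)) has_real_derivative
     (2 * dd t * (f1 * g t - f t * g1) - d1 * f t * g t) / (2 * dd t * (g t)^2 * sqrt \<bar>dd t\<bar>)) (at t)"
proof -
  have r: "sqrt \<bar>dd t\<bar> > 0" using d0 by simp
  have rr: "sqrt \<bar>dd t\<bar> * sqrt \<bar>dd t\<bar> = \<bar>dd t\<bar>" by simp
  have "((\<lambda>t. f t / (g t * sqrt \<bar>dd t\<bar>)) has_real_derivative
     (f1 * (g t * sqrt \<bar>dd t\<bar>) - f t * (g1 * sqrt \<bar>dd t\<bar> + g t * (inverse (sqrt \<bar>dd t\<bar>) / 2 * (sgn (dd t) * d1))))
      / (g t * sqrt \<bar>dd t\<bar>)^2) (at t)"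
    using r g0 d0
    by (auto intro!: derivative_eq_intros DERIV_abs_eqI ff gg dd simp: power2_eq_square)
  moreover have "(f1 * (g t * sqrt \<bar>dd t\<bar>) - f t * (g1 * sqrt \<bar>dd t\<bar> + g t * (inverse (sqrt \<bar>dd t\<bar>) / 2 * (sgn (dd t) * d1))))
      / (g t * sqrt \<bar>dd t\<bar>)^2 = (2 * dd t * (f1 * g t - f t * g1) - d1 * f t * g t) / (2 * dd t * (g t)^2 * sqrt \<bar>dd t\<bar>)"
  proof (cases "dd t > 0")
    case True
    then show ?thesis using h_aux[of "sqrt \<bar>dd t\<bar>" 1 "dd t" "g t"] r g0 d0 rr by simp
  next
    case False
    then have "dd t < 0" using d0 by simp
    then show ?thesis using h_aux[of "sqrt \<bar>dd t\<bar>" "-1" "dd t" "g t"] r g0 d0 rr by simp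
  qed
  ultimately show ?thesis by simp
qed



lemma frac_aux:
  fixes a r G X y :: real
  assumes "a \<noteq> 0" "r \<noteq> 0" "G \<noteq> 0"
  shows "(X / (2 * a * G^2 * r) = y / (2 * r)) \<longleftrightarrow> X = a * y * G^2"
proof -
  have "y * (2 * a * G^2 * r) = (a * y * G^2) * (2 * r)" by algebra
  moreover have "a * y * G^2 = y * (a * G^2)" by simp
  ultimately have "(X / (2 * a * G^2 * r) = y / (2 * r)) \<longleftrightarrow> X = y * (a * G^2)"
    using assms by (simp add: divide_simps)
  then show ?thesis by (simp only: \<open>a * y * G^2 = y * (a * G^2)\<close>)
qed

lemma lam_aux:
  fixes r s D :: real
  assumes "r > 0" "r * r = D"
  shows "r * (s / D) = s / r"
  using assms by (auto simp: field_simps)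

lemma Lf_aux:
  fixes f g r :: real
  assumes "g \<noteq> 0" "r \<noteq> 0"
  shows "f = 1 / 2 * r * g * (2 * (f / (g * r)) + 0)"
  using assms by (simp add: field_simps)

lemma eq_aux:
  fixes f g r L c :: real
  assumes "g \<noteq> 0" "r \<noteq> 0" "f = 1 / 2 * r * g * (L + c)"
  shows "f / (g * r) = (L + c) / 2"
  using assms by (simp add: field_simps)

theorem proposition9:
  fixes s e :: "real \<Rightarrow> real^3" and f g :: "real \<Rightarrow> real" and I :: "real set"
  assumes I: "open I" "is_interval I"
    and reg: "Ck_on 3 I s" "Ck_on 3 I e"
    and std: "\<forall>u\<in>I. norm (e u) = 1 \<and> norm (vderiv_n 1 e u) = 1
                     \<and> vderiv_n 1 s u \<bullet> vderiv_n 1 e u = 0"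
    and skew: "\<forall>u\<in>I. rs_delta s e u \<noteq> 0"
    and fg_reg: "Ck_on 1 I f" "Ck_on 1 I g"
    and f_nz: "\<exists>u\<in>I. f u \<noteq> 0" and g_nz: "\<exists>u\<in>I. g u \<noteq> 0"
    and q_def: "\<forall>u\<in>I. f u \<noteq> 0 \<or> g u \<noteq> 0"
  shows "((\<forall>u\<in>I. \<forall>v. f u + g u * v \<noteq> 0 \<longrightarrow> rn_divT s e f g u v = 0)
            \<longleftrightarrow> (\<forall>u\<in>I. \<forall>v. f u + g u * v \<noteq> 0 \<longrightarrow> rn_S s e f g u v = 0))
       \<and> ((\<forall>u\<in>I. \<forall>v. f u + g u * v \<noteq> 0 \<longrightarrow> rn_S s e f g u v = 0)
            \<longleftrightarrow> (conoidal_on I e \<and>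
                 (\<exists>L c. (\<forall>u\<in>I. (L has_real_derivative
                              sqrt \<bar>rs_delta s e u\<bar> * rs_lambda s e u) (at u))
                       \<and> (\<forall>u\<in>I. f u = 1 / 2 * sqrt \<bar>rs_delta s e u\<bar> * g u * (L u + c)))))"
proof -
  define dl where "dl = rs_delta s e"
  define d1 where "d1 = (\<lambda>t. triple (vderiv_n 2 s t) (e t) (vderiv_n 1 e t))"
  define f1 where "f1 = vderiv_n 1 f"
  define g1 where "g1 = vderiv_n 1 g"
  define sg where "sg = (\<lambda>t. vderiv_n 1 s t \<bullet> e t)"
  define k where "k = rs_kappa e"
  define R where "R = (\<lambda>t. 2 * dl t * (g1 t * f t - g t * f1 t) + d1 t * f t * g t + dl t * sg t * (g t)^2)"
  have dD: "\<And>t. t \<in> I \<Longrightarrow> (dl has_real_derivative d1 t) (at t)"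
    unfolding dl_def d1_def by (rule geom(1)[OF I(1) reg std skew])
  have fD: "\<And>t. t \<in> I \<Longrightarrow> (f has_real_derivative f1 t) (at t)"
    unfolding f1_def by (rule Ck1_deriv[OF fg_reg(1)])
  have gD: "\<And>t. t \<in> I \<Longrightarrow> (g has_real_derivative g1 t) (at t)"
    unfolding g1_def by (rule Ck1_deriv[OF fg_reg(2)])
  have sgD: "\<And>t. t \<in> I \<Longrightarrow> (sg has_real_derivative
      (vderiv_n 2 s t \<bullet> e t + vderiv_n 1 s t \<bullet> vderiv_n 1 e t)) (at t)"
    unfolding sg_def by (rule has_vd_inner[OF Ck3_derivs(2)[OF reg(1)] Ck3_derivs(1)[OF reg(2)]])
  have kD: "\<And>t. t \<in> I \<Longrightarrow> (k has_real_derivative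
      (triple (vderiv_n 1 e t) (vderiv_n 1 e t) (vderiv_n 2 e t) + triple (e t) (vderiv_n 2 e t) (vderiv_n 2 e t)
       + triple (e t) (vderiv_n 1 e t) (vderiv_n 3 e t))) (at t)"
    unfolding k_def rs_kappa_def[abs_def]
    by (rule has_vd_triple[OF Ck3_derivs(1)[OF reg(2)] Ck3_derivs(2)[OF reg(2)] Ck3_derivs(3)[OF reg(2)]])
  have dnz: "\<And>t. t \<in> I \<Longrightarrow> dl t \<noteq> 0" using skew by (simp add: dl_def)
  have cont: "continuous_on I f" "continuous_on I g" "continuous_on I dl" "continuous_on I sg"
    "\<And>t. t \<in> I \<Longrightarrow> isCont k t"
    using fD gD dD sgD kD by (auto intro!: continuous_at_imp_continuous_on DERIV_isCont)
  define a0 where "a0 = (\<lambda>t. dl t * sg t - k t * (dl t)^2)"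
  define a1 where "a1 = (\<lambda>t. - d1 t)"
  define a2 where "a2 = (\<lambda>t. - k t)"
  have Qf: "\<forall>b. rs_h11 s e t b * rs_w s e t b = a0 t + a1 t * b + a2 t * b^2" if t: "t \<in> I" for t
    using geom(3)[OF I(1) reg std skew t] by (simp add: a0_def a1_def a2_def dl_def sg_def k_def d1_def)
  have G11f: "\<forall>b. rn_G11 s e f g t b = (a0 t + a1 t * b + a2 t * b^2) / (f t + g t * b)" if t: "t \<in> I" for t
    using Qf[OF t] by (simp add: rn_G11_def rn_q_def divide_divide_eq_right)
  have G12f: "\<forall>t\<in>I. \<forall>b. rn_G12 s e f g t b = dl t / (f t + g t * b)"
    using geom(4)[OF I(1) reg std skew] by (simp add: rn_G12_def rn_q_def divide_divide_eq_right dl_def)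
  have Sf: "rn_S s e f g u v = (dl u * (g1 u * f u - g u * f1 u) + a2 u * (f u)^2 + a2 u * f u * g u * v
     + a2 u * (g u)^2 * v^2 / 2 - a1 u * f u * g u / 2 + a0 u * (g u)^2 / 2) / ((dl u)^2 * (f u + g u * v))"
    if u: "u \<in> I" and P: "f u + g u * v \<noteq> 0" for u v
    unfolding rn_S_def G22_zero
    by (rule S_formula[where EE="rn_G11 s e f g" and FF="rn_G12 s e f g" and ff=f and gg=g and dd=dl
          and u=u and J=I and aZ="a0 u" and aY="a1 u" and aX="a2 u", OF G11f[OF u] G12f I(1) u dD[OF u] fD[OF u] gD[OF u] P dnz[OF u]])
  have Df: "rn_divT s e f g u v = (2 * dl u * (g1 u * f u - g u * f1 u)
     - g u * ((a1 u + 2 * a2 u * v) * (f u + g u * v) - g u * (a0 u + a1 u * v + a2 u * v^2)))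
    / ((dl u)^2 * (f u + g u * v))"
    if u: "u \<in> I" and P: "f u + g u * v \<noteq> 0" for u v
    unfolding dl_def
    by (rule divT_formula[OF I(1) u skew dD[OF u, unfolded dl_def] fD[OF u] gD[OF u] Qf[OF u]
          G12f[unfolded dl_def] P])
  define Aa where "Aa = (\<lambda>t. R t - k t * (dl t)^2 * (g t)^2)"
  define Ba where "Ba = (\<lambda>t. 2 * k t * f t * g t)"
  define Ca where "Ca = (\<lambda>t. k t * (g t)^2)"
  define As where "As = (\<lambda>t. R t - k t * (dl t)^2 * (g t)^2 - 2 * k t * (f t)^2)"
  define Bs where "Bs = (\<lambda>t. - 2 * k t * f t * g t)"
  define Cs where "Cs = (\<lambda>t. - k t * (g t)^2)"
  have DfA: "rn_divT s e f g u v = (Aa u + Ba u * v + Ca u * v^2) / ((dl u)^2 * (f u + g u * v))"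
    if u: "u \<in> I" and P: "f u + g u * v \<noteq> 0" for u v
  proof -
    have "2 * dl u * (g1 u * f u - g u * f1 u)
     - g u * ((a1 u + 2 * a2 u * v) * (f u + g u * v) - g u * (a0 u + a1 u * v + a2 u * v^2))
      = Aa u + Ba u * v + Ca u * v^2"
      unfolding Aa_def Ba_def Ca_def R_def a0_def a1_def a2_def by algebra
    then show ?thesis using Df[OF u P] by simp
  qed
  have SfA: "rn_S s e f g u v = (As u + Bs u * v + Cs u * v^2) / (2 * (dl u)^2 * (f u + g u * v))"
    if u: "u \<in> I" and P: "f u + g u * v \<noteq> 0" for u v
  proof -
    have "(dl u * (g1 u * f u - g u * f1 u) + a2 u * (f u)^2 + a2 u * f u * g u * v
     + a2 u * (g u)^2 * v^2 / 2 - a1 u * f u * g u / 2 + a0 u * (g u)^2 / 2) / ((dl u)^2 * (f u + g u * v))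
      = (As u + Bs u * v + Cs u * v^2) / (2 * (dl u)^2 * (f u + g u * v))"
      using P dnz[OF u] unfolding As_def Bs_def Cs_def R_def a0_def a1_def a2_def
      by (simp add: divide_simps; algebra)
    then show ?thesis using Sf[OF u P] by simp
  qed
  have condA: "(\<forall>u\<in>I. \<forall>v. f u + g u * v \<noteq> 0 \<longrightarrow> rn_divT s e f g u v = 0)
      \<longleftrightarrow> (\<forall>u\<in>I. Aa u = 0 \<and> Ba u = 0 \<and> Ca u = 0)"
  proof safe
    fix u assume h: "\<forall>u\<in>I. \<forall>v. f u + g u * v \<noteq> 0 \<longrightarrow> rn_divT s e f g u v = 0" and u: "u \<in> I"
    have "\<forall>v. f u + g u * v \<noteq> 0 \<longrightarrow> Aa u + Ba u * v + Ca u * v^2 = 0"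
      using h u DfA[OF u] dnz[OF u] by auto
    from quad[OF this] q_def u show "Aa u = 0" "Ba u = 0" "Ca u = 0" by auto
  next
    fix u v assume "\<forall>u\<in>I. Aa u = 0 \<and> Ba u = 0 \<and> Ca u = 0" "u \<in> I" "f u + g u * v \<noteq> 0"
    then show "rn_divT s e f g u v = 0" using DfA by simp
  qed
  have condS: "(\<forall>u\<in>I. \<forall>v. f u + g u * v \<noteq> 0 \<longrightarrow> rn_S s e f g u v = 0)
      \<longleftrightarrow> (\<forall>u\<in>I. As u = 0 \<and> Bs u = 0 \<and> Cs u = 0)"
  proof safe
    fix u assume h: "\<forall>u\<in>I. \<forall>v. f u + g u * v \<noteq> 0 \<longrightarrow> rn_S s e f g u v = 0" and u: "u \<in> I"
    have "\<forall>v. f u + g u * v \<noteq> 0 \<longrightarrow> As u + Bs u * v + Cs u * v^2 = 0"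
      using h u SfA[OF u] dnz[OF u] by auto
    from quad[OF this] q_def u show "As u = 0" "Bs u = 0" "Cs u = 0" by auto
  next
    fix u v assume "\<forall>u\<in>I. As u = 0 \<and> Bs u = 0 \<and> Cs u = 0" "u \<in> I" "f u + g u * v \<noteq> 0"
    then show "rn_S s e f g u v = 0" using SfA by simp
  qed
  have hD: "((\<lambda>t. f t / (g t * sqrt \<bar>dl t\<bar>)) has_real_derivative
     (2 * dl t * (f1 t * g t - f t * g1 t) - d1 t * f t * g t) / (2 * dl t * (g t)^2 * sqrt \<bar>dl t\<bar>)) (at t)"
    if t: "t \<in> I" and g0: "g t \<noteq> 0" for t
    by (rule h_deriv[OF fD[OF t] gD[OF t] dD[OF t] dnz[OF t] g0])
  have Rrel: "R t = 0 \<longleftrightarrow>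
     (2 * dl t * (f1 t * g t - f t * g1 t) - d1 t * f t * g t) / (2 * dl t * (g t)^2 * sqrt \<bar>dl t\<bar>)
       = sg t / (2 * sqrt \<bar>dl t\<bar>)"
    if t: "t \<in> I" and g0: "g t \<noteq> 0" for t
  proof -
    have r: "sqrt \<bar>dl t\<bar> \<noteq> 0" using dnz[OF t] by simp
    have "(2 * dl t * (f1 t * g t - f t * g1 t) - d1 t * f t * g t) / (2 * dl t * (g t)^2 * sqrt \<bar>dl t\<bar>)
       = sg t / (2 * sqrt \<bar>dl t\<bar>) \<longleftrightarrow>
       (2 * dl t * (f1 t * g t - f t * g1 t) - d1 t * f t * g t) = dl t * sg t * (g t)^2"
      using frac_aux[OF dnz[OF t] r g0] .
    moreover have "R t = dl t * sg t * (g t)^2 - (2 * dl t * (f1 t * g t - f t * g1 t) - d1 t * f t * g t)"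
      unfolding R_def by (simp add: algebra_simps)
    ultimately show ?thesis by linarith
  qed
  have gnz: "\<forall>u\<in>I. g u \<noteq> 0" if R0: "\<forall>u\<in>I. R u = 0"
  proof -
    have "\<forall>t\<in>I. g t * sqrt \<bar>dl t\<bar> \<noteq> 0"
    proof (rule no_zero[OF I(2) cont(1), of _ "\<lambda>t. sg t / (2 * sqrt \<bar>dl t\<bar>)"])
      show "continuous_on I (\<lambda>t. g t * sqrt \<bar>dl t\<bar>)" using cont by (intro continuous_intros)
      show "continuous_on I (\<lambda>t. sg t / (2 * sqrt \<bar>dl t\<bar>))" using cont dnz by (intro continuous_intros) auto
      show "\<exists>y\<in>I. g y * sqrt \<bar>dl y\<bar> \<noteq> 0" using g_nz dnz by auto
      show "\<forall>t\<in>I. g t * sqrt \<bar>dl t\<bar> = 0 \<longrightarrow> f t \<noteq> 0" using q_def dnz by auto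
      show "\<forall>t\<in>I. g t * sqrt \<bar>dl t\<bar> \<noteq> 0 \<longrightarrow>
          ((\<lambda>t. f t / (g t * sqrt \<bar>dl t\<bar>)) has_real_derivative sg t / (2 * sqrt \<bar>dl t\<bar>)) (at t)"
      proof (intro ballI impI)
        fix t assume t: "t \<in> I" and "g t * sqrt \<bar>dl t\<bar> \<noteq> 0"
        then have g0: "g t \<noteq> 0" by simp
        show "((\<lambda>t. f t / (g t * sqrt \<bar>dl t\<bar>)) has_real_derivative sg t / (2 * sqrt \<bar>dl t\<bar>)) (at t)"
          using hD[OF t g0] Rrel[OF t g0] R0 t by simp
      qed
    qed
    then show ?thesis by simp
  qed
  define Phi where "Phi = ((\<forall>u\<in>I. k u = 0) \<and> (\<forall>u\<in>I. R u = 0))"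
  have PhiA: "(\<forall>u\<in>I. Aa u = 0 \<and> Ba u = 0 \<and> Ca u = 0) \<longleftrightarrow> Phi"
  proof
    assume h: "\<forall>u\<in>I. Aa u = 0 \<and> Ba u = 0 \<and> Ca u = 0"
    have kg: "\<forall>u\<in>I. k u * g u = 0" using h unfolding Ca_def by (auto simp: power2_eq_square)
    have R0: "\<forall>u\<in>I. R u = 0" using h kg unfolding Aa_def by (auto simp: power2_eq_square)
    have "\<forall>u\<in>I. k u = 0" using kg gnz[OF R0] by auto
    then show Phi using R0 by (simp add: Phi_def)
  next
    assume Phi then show "\<forall>u\<in>I. Aa u = 0 \<and> Ba u = 0 \<and> Ca u = 0"
      by (simp add: Phi_def Aa_def Ba_def Ca_def)
  qed
  have PhiS: "(\<forall>u\<in>I. As u = 0 \<and> Bs u = 0 \<and> Cs u = 0) \<longleftrightarrow> Phi"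
  proof
    assume h: "\<forall>u\<in>I. As u = 0 \<and> Bs u = 0 \<and> Cs u = 0"
    have kg: "\<forall>u\<in>I. k u * g u = 0" using h unfolding Cs_def by (auto simp: power2_eq_square)
    have k0: "\<forall>u\<in>I. k u = 0"
    proof (rule ccontr)
      assume "\<not> (\<forall>u\<in>I. k u = 0)"
      then obtain u where u: "u \<in> I" "k u \<noteq> 0" by auto
      obtain \<epsilon> where \<epsilon>: "\<epsilon> > 0" "\<forall>y. dist u y < \<epsilon> \<longrightarrow> k y \<noteq> 0"
        using continuous_at_avoid[OF cont(5)[OF u(1)] u(2)] by blast
      define U where "U = ball u \<epsilon> \<inter> I"
      have U: "open U" "u \<in> U" using I(1) u \<epsilon> by (auto simp: U_def)
      have gU: "\<forall>t\<in>U. g t = 0" using kg \<epsilon> by (auto simp: U_def dist_commute)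
      have g1u: "g1 u = 0" by (rule deriv_const_on_open[OF U gU gD[OF u(1)]])
      have gu: "g u = 0" using gU U by auto
      then have fu: "f u \<noteq> 0" using q_def u by auto
      have "R u = 0" unfolding R_def using gu g1u by simp
      then have "k u * (f u)^2 = 0" using h u gu unfolding As_def by auto
      then show False using u fu by simp
    qed
    have R0: "\<forall>u\<in>I. R u = 0" using h k0 unfolding As_def by auto
    show Phi using k0 R0 by (simp add: Phi_def)
  next
    assume Phi then show "\<forall>u\<in>I. As u = 0 \<and> Bs u = 0 \<and> Cs u = 0"
      by (simp add: Phi_def As_def Bs_def Cs_def)
  qed
  have lam: "sqrt \<bar>rs_delta s e t\<bar> * rs_lambda s e t = sg t / sqrt \<bar>dl t\<bar>" if t: "t \<in> I" for t
  proof -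
    have r: "sqrt \<bar>dl t\<bar> > 0" using dnz[OF t] by simp
    have rr: "sqrt \<bar>dl t\<bar> * sqrt \<bar>dl t\<bar> = \<bar>dl t\<bar>" by simp
    have l: "rs_lambda s e t = sg t / \<bar>dl t\<bar>"
      using geom(5)[OF I(1) reg std skew t] by (simp add: sg_def dl_def)
    show ?thesis unfolding l dl_def[symmetric] using lam_aux[OF r rr] by simp
  qed
  have PhiC: "Phi \<longleftrightarrow> (conoidal_on I e \<and>
                 (\<exists>L c. (\<forall>u\<in>I. (L has_real_derivative
                              sqrt \<bar>rs_delta s e u\<bar> * rs_lambda s e u) (at u))
                       \<and> (\<forall>u\<in>I. f u = 1 / 2 * sqrt \<bar>rs_delta s e u\<bar> * g u * (L u + c))))"
  proof
    assume Phi
    then have k0: "\<forall>u\<in>I. k u = 0" and R0: "\<forall>u\<in>I. R u = 0" by (auto simp: Phi_def)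
    have g0: "\<forall>u\<in>I. g u \<noteq> 0" using gnz[OF R0] .
    define L where "L = (\<lambda>t. 2 * (f t / (g t * sqrt \<bar>dl t\<bar>)))"
    have LD: "(L has_real_derivative sqrt \<bar>rs_delta s e u\<bar> * rs_lambda s e u) (at u)" if u: "u \<in> I" for u
    proof -
      have "((\<lambda>t. f t / (g t * sqrt \<bar>dl t\<bar>)) has_real_derivative sg u / (2 * sqrt \<bar>dl u\<bar>)) (at u)"
        using hD[OF u] Rrel[OF u] R0 g0 u by auto
      then have "(L has_real_derivative 2 * (sg u / (2 * sqrt \<bar>dl u\<bar>))) (at u)"
        unfolding L_def by (rule DERIV_cmult)
      then show ?thesis unfolding lam[OF u] by simp
    qed
    have Lf: "f u = 1 / 2 * sqrt \<bar>rs_delta s e u\<bar> * g u * (L u + 0)" if u: "u \<in> I" for u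
    proof -
      have "sqrt \<bar>dl u\<bar> \<noteq> 0" using dnz[OF u] by simp
      from Lf_aux[OF g0[rule_format, OF u] this, of "f u"] show ?thesis unfolding L_def dl_def .
    qed
    show "conoidal_on I e \<and>
         (\<exists>L c. (\<forall>u\<in>I. (L has_real_derivative sqrt \<bar>rs_delta s e u\<bar> * rs_lambda s e u) (at u))
               \<and> (\<forall>u\<in>I. f u = 1 / 2 * sqrt \<bar>rs_delta s e u\<bar> * g u * (L u + c)))"
      using k0 LD Lf unfolding conoidal_on_def k_def by blast
  next
    assume "conoidal_on I e \<and>
         (\<exists>L c. (\<forall>u\<in>I. (L has_real_derivative sqrt \<bar>rs_delta s e u\<bar> * rs_lambda s e u) (at u))
               \<and> (\<forall>u\<in>I. f u = 1 / 2 * sqrt \<bar>rs_delta s e u\<bar> * g u * (L u + c)))"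
    then obtain L c where k0: "\<forall>u\<in>I. k u = 0"
      and LD: "\<forall>u\<in>I. (L has_real_derivative sqrt \<bar>rs_delta s e u\<bar> * rs_lambda s e u) (at u)"
      and Lf: "\<forall>u\<in>I. f u = 1 / 2 * sqrt \<bar>rs_delta s e u\<bar> * g u * (L u + c)"
      unfolding conoidal_on_def k_def by blast
    have g0: "g u \<noteq> 0" if u: "u \<in> I" for u
    proof
      assume "g u = 0"
      then have "f u = 0" using Lf[rule_format, OF u] by simp
      then show False using q_def u \<open>g u = 0\<close> by auto
    qed
    have R0: "R u = 0" if u: "u \<in> I" for u
    proof -
      have eq: "f t / (g t * sqrt \<bar>dl t\<bar>) = (L t + c) / 2" if t: "t \<in> I" for t
      proof -
        have "sqrt \<bar>dl t\<bar> \<noteq> 0" using dnz[OF t] by simp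
        from eq_aux[OF g0[OF t] this Lf[rule_format, OF t, folded dl_def]] show ?thesis .
      qed
      have "((\<lambda>t. (L t + c) / 2) has_real_derivative (sg u / sqrt \<bar>dl u\<bar>) / 2) (at u)"
        using LD u lam[OF u] by (auto intro!: derivative_eq_intros)
      then have "((\<lambda>t. f t / (g t * sqrt \<bar>dl t\<bar>)) has_real_derivative (sg u / sqrt \<bar>dl u\<bar>) / 2) (at u)"
        by (rule has_field_derivative_transform_within_open[OF _ I(1) u]) (simp add: eq)
      from DERIV_unique[OF hD[OF u g0[OF u]] this]
      have "(2 * dl u * (f1 u * g u - f u * g1 u) - d1 u * f u * g u) / (2 * dl u * (g u)^2 * sqrt \<bar>dl u\<bar>)
          = sg u / (2 * sqrt \<bar>dl u\<bar>)" by simp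
      then show ?thesis using Rrel[OF u g0[OF u]] by simp
    qed
    show Phi using k0 R0 by (simp add: Phi_def)
  qed
  have A: "(\<forall>u\<in>I. \<forall>v. f u + g u * v \<noteq> 0 \<longrightarrow> rn_divT s e f g u v = 0) \<longleftrightarrow> Phi"
    using condA PhiA by (rule trans)
  have B: "(\<forall>u\<in>I. \<forall>v. f u + g u * v \<noteq> 0 \<longrightarrow> rn_S s e f g u v = 0) \<longleftrightarrow> Phi"
    using condS PhiS by (rule trans)
  show ?thesis unfolding A B using PhiC by (rule conjI[OF refl])
qed

end
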